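(* Assume $T$ and $D$ are known and set $$\eta=\frac{1}{4e\beta},\qquad \beta=\sqrt{\frac{\frac{eKT/2+D}{4e}+D}{4e\ln K}}.$$ Then the expected regret of Skipper$(\beta,\mathrm{DEW}(\eta,\beta))$ against an oblivious adversary satisfies $$\bar{\mathcal R}_T\le 2\sqrt{\left(\frac{KTe}{2}+(1+4e)D\right)\ln K}.$$
   Context: Setting: fix integers $K\ge 2$, $T\ge 1$, and write $[K]=\{1,\dots,K\}$. An oblivious adversary fixes in advance losses $\ell_t^a\in[0,1]$ for $t=1,2,\dots$, $a\in[K]$, and nonnegative integer delays $d_1,d_2,\dots$. In each round $t$ the learner picks (possibly at random) an action $A_t\in[K]$ and suffers loss $\ell_t^{A_t}$; at the end of round $t$ (after $A_t$ has been chosen) it observes the pairs $(s,\ell_s^{A_s})$ for all $s\le t$ with $s+d_s=t$. The expected regret is $\bar{\mathcal R}_T=\mathbb E\big[\sum_{t=1}^T\ell_t^{A_t}\big]-\min_{a\in[K]}\sum_{t=1}^T\ell_t^a$, the expectation being over the learner's randomization. $D=\sum_{t=1}^T d_t$. Algorithm DEW (delayed exponential weights) with inputs $\eta>0$ and $d_{\max}$: set $\eta'=\min\{\eta,(4e\,d_{\max})^{-1}\}$ and $w_0^a=1$ for all $a$. For $t=1,2,\dots$: let $p_t^a=w_{t-1}^a/\sum_b w_{t-1}^b$; draw $A_t\sim p_t$ and play it; at the end of round $t$, for every received pair $(s,\ell_s^{A_s})$ form the estimates $\hat\ell_s^a=\ell_s^a\mathbb 1(a=A_s)/p_s^a$ for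 all $a$; update $w_t^a=w_{t-1}^a\exp\big(-\eta'\sum_{s}\hat\ell_s^a\big)$, the sum over pairs received at the end of round $t$. Skipper$(\beta,\mathcal A)$ with threshold $\beta>0$ and base algorithm $\mathcal A$: in every round $t$ it plays the action $A_t$ proposed by $\mathcal A$, and at the end of round $t$ it passes to $\mathcal A$ exactly those observed pairs $(s,\ell_s^{A_s})$ with $s+d_s=t$ and $d_s<\beta$. Skipper$(\beta,\mathrm{DEW}(\eta,\beta))$ denotes Skipper with threshold $\beta$ wrapping DEW with learning rate $\eta$ and $d_{\max}=\beta$. *)

theory Defs
  imports Complex_Main "HOL-Library.FuncSet"
begin

text \<open>Rounds are indexed 1,2,...; actions are 1..K. An action history is a function
  A :: nat => nat with A s the action played in round s.
  skipper_dew_est K lr beta l d A t a is the cumulative importance-weighted loss estimate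
  of action a that DEW (learning rate lr) has received from Skipper (threshold beta)
  before round t, i.e. from all pairs (s, l s (A s)) with s + d s < t (observed at the end
  of round s + d s <= t - 1) and d s < beta.\<close>

function skipper_dew_est ::
  "nat \<Rightarrow> real \<Rightarrow> real \<Rightarrow> (nat \<Rightarrow> nat \<Rightarrow> real) \<Rightarrow> (nat \<Rightarrow> nat) \<Rightarrow> (nat \<Rightarrow> nat) \<Rightarrow> nat \<Rightarrow> nat \<Rightarrow> real"
where
  "skipper_dew_est K lr beta l d A t a =
     (\<Sum>s\<in>{1..<t}.
        if s + d s < t \<and> real (d s) < beta \<and> A s = a
        then l s a / (exp (- lr * skipper_dew_est K lr beta l d A s a)
                      / (\<Sum>b\<in>{1..K}. exp (- lr * skipper_dew_est K lr beta l d A s b)))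
        else 0)"
  by pat_completeness auto
termination
  by (relation "measure (\<lambda>(K, lr, beta, l, d, A, t, a). t)") auto

text \<open>Effective learning rate of DEW(eta, d_max) : eta' = min eta (1/(4 e d_max)).\<close>
definition dew_rate :: "real \<Rightarrow> real \<Rightarrow> real" where
  "dew_rate eta dmax = min eta (1 / (4 * exp 1 * dmax))"

text \<open>Probability p_t^a with which Skipper(beta, DEW(eta, beta)) plays action a in round t,
  given the history A of its earlier actions (only A s for s < t matters).\<close>
definition skipper_dew_prob ::
  "nat \<Rightarrow> real \<Rightarrow> real \<Rightarrow> (nat \<Rightarrow> nat \<Rightarrow> real) \<Rightarrow> (nat \<Rightarrow> nat) \<Rightarrow> (nat \<Rightarrow> nat) \<Rightarrow> nat \<Rightarrow> nat \<Rightarrow> real"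
where
  "skipper_dew_prob K eta beta l d A t a =
     (let lr = dew_rate eta beta in
      exp (- lr * skipper_dew_est K lr beta l d A t a)
      / (\<Sum>b\<in>{1..K}. exp (- lr * skipper_dew_est K lr beta l d A t b)))"

text \<open>Expected regret over T rounds: expectation over all action sequences
  A \<in> {1..T} \<rightarrow> {1..K}, with probability prod_t p_t^{A_t} (chain rule), of the
  cumulative loss, minus the loss of the best fixed action.\<close>
definition skipper_dew_regret ::
  "nat \<Rightarrow> nat \<Rightarrow> real \<Rightarrow> real \<Rightarrow> (nat \<Rightarrow> nat \<Rightarrow> real) \<Rightarrow> (nat \<Rightarrow> nat) \<Rightarrow> real"
where
  "skipper_dew_regret K T eta beta l d =
     (\<Sum>A\<in>(\<Pi>\<^sub>E t\<in>{1..T}. {1..K}).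
        (\<Prod>t\<in>{1..T}. skipper_dew_prob K eta beta l d A t (A t)) * (\<Sum>t\<in>{1..T}. l t (A t)))
     - (MIN a\<in>{1..K}. \<Sum>t\<in>{1..T}. l t a)"

end

theory Submission
  imports Defs
begin

context
  fixes K :: nat and eta beta :: real and l :: "nat \<Rightarrow> nat \<Rightarrow> real" and d :: "nat \<Rightarrow> nat"
  assumes K1: "K \<ge> 1" and eta_pos: "eta > 0" and beta_pos: "beta > 0"
    and eb: "eta * beta \<le> 1 / (4 * exp 1)"
    and lrange: "\<And>t a. 0 \<le> l t a \<and> l t a \<le> 1"
begin

definition est where "est A t a = skipper_dew_est K eta beta l d A t a"
definition W where "W A t = (\<Sum>b\<in>{1..K}. exp (- eta * est A t b))"
definition p where "p A t a = exp (- eta * est A t a) / W A t"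
definition lh where "lh A s a = (if A s = a then l s a / p A s a else 0)"
definition kept where "kept s \<longleftrightarrow> real (d s) < beta"

lemma W_pos: "W A t > 0"
  unfolding W_def using K1 by (intro sum_pos) auto

lemma p_pos: "p A t a > 0"
  unfolding p_def using W_pos by simp

lemma p_sum: "(\<Sum>a\<in>{1..K}. p A t a) = 1"
proof -
  have "W A t \<noteq> 0" using W_pos[of A t] by simp
  then show ?thesis unfolding p_def by (simp add: sum_divide_distrib[symmetric] W_def)
qed

lemma p_sum': "(\<Sum>a\<in>{Suc 0..K}. p A t a) = 1"
  using p_sum by simp

lemma lh_nonneg: "lh A s a \<ge> 0"
  unfolding lh_def using p_pos[of A s a] lrange[of s a] by (auto intro!: divide_nonneg_pos)

lemma est_unfold: "est A t a = (\<Sum>s\<in>{1..<t}. if s + d s < t \<and> kept s then lh A s a else 0)"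
  unfolding est_def
  apply (subst skipper_dew_est.simps)
  apply (rule sum.cong, simp)
  apply (simp del: skipper_dew_est.simps add: lh_def p_def W_def est_def kept_def)
  done

lemma est_dep: "(\<And>s. s + d s < t \<Longrightarrow> A s = A' s) \<Longrightarrow> est A t a = est A' t a"
proof (induction t arbitrary: a rule: less_induct)
  case (less t)
  have "lh A s a = lh A' s a" if "s < t" "s + d s < t" for s
  proof -
    have e: "est A s b = est A' s b" for b
      using that by (intro less.IH) (auto intro: less.prems)
    have "p A s a = p A' s a" unfolding p_def W_def e ..
    then show ?thesis unfolding lh_def using less.prems[OF that(2)] by simp
  qed
  then show ?case unfolding est_unfold[of A] est_unfold[of A'] by (intro sum.cong) auto
qed

lemma p_dep: "(\<And>s. s + d s < t \<Longrightarrow> A s = A' s) \<Longrightarrow> p A t a = p A' t a"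
proof -
  assume h: "\<And>s. s + d s < t \<Longrightarrow> A s = A' s"
  have "est A t b = est A' t b" for b by (rule est_dep[OF h])
  then show ?thesis unfolding p_def W_def by simp
qed

lemma est_nonneg: "est A t a \<ge> 0"
  unfolding est_unfold using lh_nonneg by (intro sum_nonneg) auto

lemma est_mono: "u \<le> r \<Longrightarrow> est A u a \<le> est A r a"
proof -
  assume ur: "u \<le> r"
  have "est A u a \<le> (\<Sum>s\<in>{1..<u}. if s + d s < r \<and> kept s then lh A s a else 0)"
    unfolding est_unfold using ur lh_nonneg by (intro sum_mono) auto
  also have "\<dots> \<le> est A r a"
    unfolding est_unfold using ur lh_nonneg by (intro sum_mono2) auto
  finally show ?thesis .
qed

definition Expt :: "nat set \<Rightarrow> ((nat \<Rightarrow> nat) \<Rightarrow> real) \<Rightarrow> real" where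
  "Expt I g = (\<Sum>A\<in>Pi\<^sub>E I (\<lambda>_. {1..K}). (\<Prod>t\<in>I. p A t (A t)) * g A)"

lemma p_upd: "t \<le> j + d j \<Longrightarrow> p (A(j:=y)) t a = p A t a"
  by (rule p_dep) auto

lemma Expt_remove:
  assumes fin: "finite I" and jI: "j \<in> I" and le: "\<forall>t\<in>I. t \<le> j + d j"
  shows "Expt I g = Expt (I - {j}) (\<lambda>A. \<Sum>a\<in>{1..K}. p A j a * g (A(j:=a)))"
proof -
  define I' where "I' = I - {j}"
  have II: "I = insert j I'" and jn: "j \<notin> I'" and fin': "finite I'" using jI fin by (auto simp: I'_def)
  define F where "F A = (\<Prod>t\<in>I. p A t (A t)) * g A" for A
  have "Expt I g = (\<Sum>A\<in>(\<lambda>(y, h). h(j := y)) ` ({1..K} \<times> Pi\<^sub>E I' (\<lambda>_. {1..K})). F A)"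
    unfolding Expt_def F_def II PiE_insert_eq ..
  also have "\<dots> = (\<Sum>(y,h)\<in>{1..K} \<times> Pi\<^sub>E I' (\<lambda>_. {1..K}). F (h(j:=y)))"
    by (subst sum.reindex) (use inj_combinator[OF jn, of "\<lambda>_. {1..K}"] in \<open>auto simp: case_prod_beta\<close>)
  also have "\<dots> = (\<Sum>y\<in>{1..K}. \<Sum>h\<in>Pi\<^sub>E I' (\<lambda>_. {1..K}). F (h(j:=y)))"
    by (rule sum.cartesian_product[symmetric])
  also have "\<dots> = (\<Sum>h\<in>Pi\<^sub>E I' (\<lambda>_. {1..K}). \<Sum>y\<in>{1..K}. F (h(j:=y)))"
    by (rule sum.swap)
  also have "\<dots> = (\<Sum>h\<in>Pi\<^sub>E I' (\<lambda>_. {1..K}). (\<Prod>t\<in>I'. p h t (h t)) * (\<Sum>y\<in>{1..K}. p h j y * g (h(j:=y))))"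
  proof (rule sum.cong[OF refl])
    fix h assume h: "h \<in> Pi\<^sub>E I' (\<lambda>_. {1..K})"
    have "F (h(j:=y)) = (\<Prod>t\<in>I'. p h t (h t)) * (p h j y * g (h(j:=y)))" for y
    proof -
      have "(\<Prod>t\<in>I. p (h(j:=y)) t ((h(j:=y)) t)) = p (h(j:=y)) j y * (\<Prod>t\<in>I'. p (h(j:=y)) t ((h(j:=y)) t))"
        unfolding II using fin' jn by simp
      also have "\<dots> = p h j y * (\<Prod>t\<in>I'. p h t (h t))"
        using le jn II by (intro arg_cong2[where f="(*)"] prod.cong) (auto intro!: p_upd)
      finally show ?thesis unfolding F_def by simp
    qed
    then show "(\<Sum>y\<in>{1..K}. F (h(j:=y))) = (\<Prod>t\<in>I'. p h t (h t)) * (\<Sum>y\<in>{1..K}. p h j y * g (h(j:=y)))"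
      by (simp add: sum_distrib_left)
  qed
  also have "\<dots> = Expt (I - {j}) (\<lambda>A. \<Sum>a\<in>{1..K}. p A j a * g (A(j:=a)))"
    unfolding Expt_def I'_def ..
  finally show ?thesis .
qed

lemma Expt_empty: "Expt {} g = g (\<lambda>_. undefined)"
  unfolding Expt_def by simp

lemma Expt_mono: "(\<And>A. A \<in> Pi\<^sub>E I (\<lambda>_. {1..K}) \<Longrightarrow> g A \<le> h A) \<Longrightarrow> Expt I g \<le> Expt I h"
  unfolding Expt_def using p_pos by (intro sum_mono mult_left_mono prod_nonneg) (auto intro: less_imp_le)

lemma Expt_add: "Expt I (\<lambda>A. g A + h A) = Expt I g + Expt I h"
  unfolding Expt_def by (simp add: distrib_left sum.distrib)

lemma Expt_sum: "Expt I (\<lambda>A. \<Sum>x\<in>X. g x A) = (\<Sum>x\<in>X. Expt I (g x))"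
  unfolding Expt_def by (simp add: sum_distrib_left sum.swap[of _ X])

lemma Expt_cmult: "Expt I (\<lambda>A. c * g A) = c * Expt I g"
  unfolding Expt_def by (simp add: sum_distrib_left mult_ac)

lemma Expt_diff: "Expt I (\<lambda>A. g A - h A) = Expt I g - Expt I h"
  unfolding Expt_def by (simp add: right_diff_distrib sum_subtractf)

definition dep_lt :: "nat \<Rightarrow> ((nat \<Rightarrow> nat) \<Rightarrow> real) \<Rightarrow> bool" where
  "dep_lt t g \<longleftrightarrow> (\<forall>A A'. (\<forall>s<t. A s = A' s) \<longrightarrow> g A = g A')"

lemma Expt_trunc:
  assumes "finite I" "dep_lt t g"
  shows "Expt I g = Expt (I \<inter> {..<t}) g"
  using assms(1)
proof (induction I rule: finite_linorder_max_induct)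
  case empty
  then show ?case by simp
next
  case (insert b I)
  show ?case
  proof (cases "b < t")
    case True
    then have "insert b I \<inter> {..<t} = insert b I" using insert by auto
    then show ?thesis by simp
  next
    case False
    have bI: "b \<notin> I" using insert by auto
    have "Expt (insert b I) g = Expt I (\<lambda>A. \<Sum>a\<in>{1..K}. p A b a * g (A(b:=a)))"
    proof -
      have "\<forall>t\<in>I. t \<le> b + d b" using insert(2) by (auto intro: less_imp_le trans_le_add1)
      then show ?thesis using Expt_remove[of "insert b I" b g] insert(1) bI by simp
    qed
    also have "\<dots> = Expt I g"
    proof -
      have "g (A(b:=a)) = g A" for A a using assms(2) False unfolding dep_lt_def by auto
      then show ?thesis using p_sum by (simp add: sum_distrib_right[symmetric])
    qed
    also have "\<dots> = Expt (I \<inter> {..<t}) g" by (rule insert.IH)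
    also have "I \<inter> {..<t} = insert b I \<inter> {..<t}" using False by auto
    finally show ?thesis .
  qed
qed

lemma Expt_one: "finite I \<Longrightarrow> Expt I (\<lambda>_. 1) = 1"
  using Expt_trunc[of I 0 "\<lambda>_. 1"] by (simp add: dep_lt_def Expt_empty)

lemma Expt_const: "finite I \<Longrightarrow> Expt I (\<lambda>_. c) = c"
  using Expt_cmult[of I c "\<lambda>_. 1"] Expt_one by simp

definition B :: nat where "B = nat (\<lceil>beta\<rceil> - 1)"

lemma kept_B: "kept s \<Longrightarrow> d s \<le> B"
proof -
  assume "kept s"
  then have "real (d s) < beta" by (simp add: kept_def)
  also have "beta \<le> of_int \<lceil>beta\<rceil>" by (rule le_of_int_ceiling)
  finally have "int (d s) < \<lceil>beta\<rceil>" by linarith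
  then show ?thesis unfolding B_def by linarith
qed

lemma B_le: "real B \<le> beta"
proof -
  have "\<lceil>beta\<rceil> \<ge> 1" using beta_pos by (simp add: order.strict_implies_order)
  moreover have "of_int \<lceil>beta\<rceil> \<le> beta + 1" by (rule of_int_ceiling_le_add_one)
  ultimately show ?thesis unfolding B_def by (simp add: of_nat_nat)
qed

lemma e_ge2: "exp (1::real) \<ge> 2"
  using exp_ge_add_one_self[of "1::real"] by simp

lemma etaB: "4 * eta * real B \<le> 1 / exp 1"
proof -
  have "eta * real B \<le> eta * beta" using B_le eta_pos by (simp add: mult_left_mono)
  then have "eta * real B \<le> 1 / (4 * exp 1)" using eb by linarith
  then have "4 * (eta * real B) \<le> 4 * (1 / (4 * exp 1))" by linarith
  then show ?thesis by simp
qed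

lemma etaB2: "4 * eta * real B \<le> 1/2"
  using etaB e_ge2 by (smt (verit) frac_le zero_less_one)

lemma p_dep_lt: "(\<forall>s<t. A s = A' s) \<Longrightarrow> p A t a = p A' t a"
  by (rule p_dep) auto

lemma lh_dep: "(\<forall>s'\<le>s. A s' = A' s') \<Longrightarrow> lh A s a = lh A' s a"
  unfolding lh_def using p_dep_lt[of s A A' a] by auto

definition cnt where "cnt u r = card {u'\<in>{1..<r}. kept u' \<and> u \<le> u' + d u' \<and> u' + d u' < r}"

lemma cnt_le: "r \<le> u + B \<Longrightarrow> cnt u r \<le> 2 * B"
proof -
  assume r: "r \<le> u + B"
  have "{u'\<in>{1..<r}. kept u' \<and> u \<le> u' + d u' \<and> u' + d u' < r} \<subseteq> {u - B..<r}"
    using kept_B by fastforce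
  then have "cnt u r \<le> card {u - B..<r}" unfolding cnt_def by (intro card_mono) auto
  also have "\<dots> \<le> 2 * B" using r by simp
  finally show ?thesis .
qed

lemma ratio_of_W:
  assumes "W A u * (1 - 2 * eta * cnt u r) \<le> W A r" "u \<le> r" "r \<le> u + B"
  shows "p A r a \<le> 2 * p A u a"
proof -
  have "real (cnt u r) \<le> 2 * real B" using cnt_le[OF assms(3)] by linarith
  then have "2 * eta * cnt u r \<le> 4 * eta * real B" using eta_pos by (simp add: mult_left_mono)
  then have "1 - 2 * eta * cnt u r \<ge> 1/2" using etaB2 by linarith
  then have "W A u * (1/2) \<le> W A u * (1 - 2 * eta * cnt u r)"
    using W_pos[of A u] by (intro mult_left_mono) auto
  then have Wr: "W A u / 2 \<le> W A r" using assms(1) by simp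
  have "exp (- eta * est A r a) \<le> exp (- eta * est A u a)"
    using est_mono[OF assms(2)] eta_pos by (simp add: mult_left_mono)
  then have "p A r a \<le> exp (- eta * est A u a) / W A r" unfolding p_def using W_pos[of A r]
    by (simp add: divide_right_mono)
  also have "\<dots> \<le> exp (- eta * est A u a) / (W A u / 2)"
    using Wr W_pos[of A u] by (intro divide_left_mono) auto
  also have "\<dots> = 2 * p A u a" unfolding p_def by simp
  finally show ?thesis .
qed

lemma plh_bound:
  assumes "\<And>a. a \<in> {1..K} \<Longrightarrow> p A r a \<le> C * p A u a" and C0: "C \<ge> 0"
  shows "(\<Sum>b\<in>{1..K}. p A r b * lh A u b) \<le> C"
proof -
  have "p A r b * lh A u b \<le> (if b = A u then C else 0)" if "b \<in> {1..K}" for b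
  proof (cases "b = A u")
    case True
    have "p A r b * lh A u b = p A r b / p A u b * l u b" using True unfolding lh_def by simp
    also have "\<dots> \<le> C * 1"
    proof (rule mult_mono)
      show "p A r b / p A u b \<le> C" using assms(1)[OF that] p_pos[of A u b] by (simp add: divide_le_eq)
      show "0 \<le> C" by (rule C0)
    qed (use lrange p_pos in \<open>auto intro: less_imp_le\<close>)
    finally show ?thesis using True by simp
  qed (simp add: lh_def)
  then have "(\<Sum>b\<in>{1..K}. p A r b * lh A u b) \<le> (\<Sum>b\<in>{1..K}. if b = A u then C else 0)"
    by (rule sum_mono)
  also have "\<dots> \<le> C"
    using C0 by (simp add: sum.delta)
  finally show ?thesis .
qed

definition Nw where "Nw A v b = (\<Sum>u\<in>{1..<Suc v}. if kept u \<and> u + d u = v then lh A u b else 0)"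
definition NS where "NS v = {u\<in>{1..<Suc v}. kept u \<and> u + d u = v}"

lemma est_succ: "est A (Suc v) b = est A v b + Nw A v b"
proof -
  have "est A (Suc v) b = (\<Sum>s\<in>{1..<Suc v}. (if s + d s < v \<and> kept s then lh A s b else 0)
          + (if kept s \<and> s + d s = v then lh A s b else 0))"
    unfolding est_unfold by (intro sum.cong) auto
  also have "\<dots> = (\<Sum>s\<in>{1..<Suc v}. (if s + d s < v \<and> kept s then lh A s b else 0)) + Nw A v b"
    unfolding Nw_def by (rule sum.distrib)
  also have "(\<Sum>s\<in>{1..<Suc v}. (if s + d s < v \<and> kept s then lh A s b else 0)) = est A v b"
    unfolding est_unfold by (simp add: sum.op_ivl_Suc)
  finally show ?thesis .
qed

lemma W_step:
  assumes rat: "\<And>u a. u \<in> NS r \<Longrightarrow> a \<in> {1..K} \<Longrightarrow> p A r a \<le> 2 * p A u a"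
  shows "W A r * (1 - 2 * eta * card (NS r)) \<le> W A (Suc r)"
proof -
  have pe: "exp (- eta * est A r b) = W A r * p A r b" for b
    unfolding p_def using W_pos[of A r] by simp
  have "(\<Sum>b\<in>{1..K}. p A r b * Nw A r b)
      = (\<Sum>u\<in>{1..<Suc r}. if kept u \<and> u + d u = r then (\<Sum>b\<in>{1..K}. p A r b * lh A u b) else 0)"
  proof -
    have "(\<Sum>b\<in>{1..K}. p A r b * Nw A r b) = (\<Sum>b\<in>{1..K}. \<Sum>u\<in>{1..<Suc r}. if kept u \<and> u + d u = r then p A r b * lh A u b else 0)"
      unfolding Nw_def sum_distrib_left by (intro sum.cong) auto
    also have "\<dots> = (\<Sum>u\<in>{1..<Suc r}. \<Sum>b\<in>{1..K}. if kept u \<and> u + d u = r then p A r b * lh A u b else 0)"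
      by (rule sum.swap)
    also have "\<dots> = (\<Sum>u\<in>{1..<Suc r}. if kept u \<and> u + d u = r then (\<Sum>b\<in>{1..K}. p A r b * lh A u b) else 0)"
      by (intro sum.cong) auto
    finally show ?thesis .
  qed
  also have "\<dots> \<le> (\<Sum>u\<in>{1..<Suc r}. if kept u \<and> u + d u = r then 2 else 0)"
  proof -
    have "(\<Sum>b\<in>{1..K}. p A r b * lh A u b) \<le> 2" if "u \<in> NS r" for u
      by (rule plh_bound) (auto intro: rat[OF that])
    then show ?thesis by (intro sum_mono) (auto simp: NS_def)
  qed
  also have "\<dots> = 2 * card (NS r)"
    unfolding NS_def by (subst sum.inter_filter[symmetric]) auto
  finally have S: "(\<Sum>b\<in>{1..K}. p A r b * Nw A r b) \<le> 2 * card (NS r)" .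
  have "W A r * (1 - 2 * eta * card (NS r)) \<le> W A r * (1 - eta * (\<Sum>b\<in>{1..K}. p A r b * Nw A r b))"
    using S W_pos[of A r] eta_pos by (intro mult_left_mono) (auto simp: mult_left_mono)
  also have "\<dots> = (\<Sum>b\<in>{1..K}. exp (- eta * est A r b) * (1 - eta * Nw A r b))"
  proof -
    have "(\<Sum>b\<in>{1..K}. W A r * p A r b * (1 - eta * Nw A r b))
       = W A r * (\<Sum>b\<in>{1..K}. p A r b) - eta * W A r * (\<Sum>b\<in>{1..K}. p A r b * Nw A r b)"
      by (simp add: algebra_simps sum_subtractf sum_distrib_left)
    then show ?thesis unfolding pe p_sum by (simp add: algebra_simps)
  qed
  also have "\<dots> \<le> (\<Sum>b\<in>{1..K}. exp (- eta * est A r b) * exp (- eta * Nw A r b))"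
    using exp_ge_add_one_self[of "- (eta * Nw A r _)"] by (intro sum_mono mult_left_mono) (auto simp: less_imp_le)
  also have "\<dots> = W A (Suc r)"
    unfolding W_def est_succ by (simp add: distrib_left exp_add[symmetric])
  finally show ?thesis .
qed

lemma cnt_Suc: "u \<le> r \<Longrightarrow> cnt u (Suc r) = cnt u r + card (NS r)"
proof -
  assume ur: "u \<le> r"
  have "{u'\<in>{1..<Suc r}. kept u' \<and> u \<le> u' + d u' \<and> u' + d u' < Suc r}
      = {u'\<in>{1..<r}. kept u' \<and> u \<le> u' + d u' \<and> u' + d u' < r} \<union> NS r"
    using ur unfolding NS_def by auto
  moreover have "{u'\<in>{1..<r}. kept u' \<and> u \<le> u' + d u' \<and> u' + d u' < r} \<inter> NS r = {}"
    unfolding NS_def by auto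
  ultimately show ?thesis unfolding cnt_def
    by (simp add: card_Un_disjoint NS_def)
qed

lemma NS_le: "u \<le> r \<Longrightarrow> Suc r \<le> u + B \<Longrightarrow> card (NS r) \<le> 2 * B"
  using cnt_Suc[of u r] cnt_le[of "Suc r" u] by simp

lemma stab: "u \<le> r \<Longrightarrow> r \<le> u + B \<Longrightarrow> W A u * (1 - 2 * eta * cnt u r) \<le> W A r"
proof (induction r arbitrary: u)
  case 0
  then show ?case by (simp add: cnt_def)
next
  case (Suc r)
  show ?case
  proof (cases "u = Suc r")
    case True
    have "{u'\<in>{1..<u}. kept u' \<and> u \<le> u' + d u' \<and> u' + d u' < u} = {}" by auto
    then have "cnt u u = 0" unfolding cnt_def by (metis card.empty)
    then show ?thesis using True by simp
  next
    case False
    then have ur: "u \<le> r" "r \<le> u + B" using Suc.prems by auto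
    define c where "c = cnt u r"
    define n where "n = card (NS r)"
    have IH: "W A u * (1 - 2 * eta * c) \<le> W A r" using Suc.IH[OF ur] by (simp add: c_def)
    have rat: "p A r a \<le> 2 * p A u' a" if "u' \<in> NS r" "a \<in> {1..K}" for u' a
    proof -
      have u': "u' \<le> r" "r \<le> u' + B" using that kept_B unfolding NS_def by auto
      show ?thesis by (rule ratio_of_W[OF Suc.IH[OF u'] u'])
    qed
    have step: "W A r * (1 - 2 * eta * n) \<le> W A (Suc r)"
      unfolding n_def by (rule W_step[OF rat])
    have cn: "cnt u (Suc r) = c + n" unfolding c_def n_def by (rule cnt_Suc[OF ur(1)])
    have "real c \<le> 2 * real B" using cnt_le[OF ur(2)] unfolding c_def by linarith
    then have "eta * c \<le> eta * (2 * real B)" using eta_pos by (intro mult_left_mono) auto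
    then have c1: "2 * eta * c \<le> 1/2" using etaB2 by linarith
    have "real n \<le> 2 * real B" using NS_le[OF ur(1)] Suc.prems(2) unfolding n_def by linarith
    then have "eta * n \<le> eta * (2 * real B)" using eta_pos by (intro mult_left_mono) auto
    then have n1: "2 * eta * n \<le> 1/2" using etaB2 by linarith
    have c0: "2 * eta * c \<ge> 0" "2 * eta * n \<ge> 0" using eta_pos by auto
    have "W A u * (1 - 2 * eta * cnt u (Suc r)) = W A u * (1 - 2 * eta * c - 2 * eta * n)"
      by (simp add: cn algebra_simps)
    also have "\<dots> \<le> W A u * ((1 - 2 * eta * c) * (1 - 2 * eta * n))"
      using W_pos[of A u] c0 mult_nonneg_nonneg[OF c0] by (intro mult_left_mono) (auto simp: algebra_simps)
    also have "\<dots> = (W A u * (1 - 2 * eta * c)) * (1 - 2 * eta * n)" by simp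
    also have "\<dots> \<le> W A r * (1 - 2 * eta * n)"
      using IH n1 by (intro mult_right_mono) auto
    also have "\<dots> \<le> W A (Suc r)" by (rule step)
    finally show ?thesis .
  qed
qed

lemma ratio: "u \<le> r \<Longrightarrow> r \<le> u + B \<Longrightarrow> p A r a \<le> 2 * p A u a"
  by (rule ratio_of_W[OF stab])

lemma swap_if: "(\<Sum>b\<in>X. g b * (\<Sum>s\<in>S. if P s then h s b else 0)) = (\<Sum>s\<in>S. if P s then (\<Sum>b\<in>X. g b * h s b) else (0::real))"
proof -
  have "(\<Sum>b\<in>X. g b * (\<Sum>s\<in>S. if P s then h s b else 0)) = (\<Sum>b\<in>X. \<Sum>s\<in>S. if P s then g b * h s b else 0)"
    unfolding sum_distrib_left by (intro sum.cong) auto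
  also have "\<dots> = (\<Sum>s\<in>S. \<Sum>b\<in>X. if P s then g b * h s b else 0)"
    by (rule sum.swap)
  also have "\<dots> = (\<Sum>s\<in>S. if P s then (\<Sum>b\<in>X. g b * h s b) else 0)"
    by (intro sum.cong) auto
  finally show ?thesis .
qed

lemma sum_if_const: "finite S \<Longrightarrow> (\<Sum>s\<in>S. if P s then c else 0) = c * real (card {s\<in>S. P s})"
  by (subst sum.inter_filter[symmetric]) auto

definition f where "f A t b = (\<Sum>s\<in>{1..<t}. if kept s then lh A s b else 0)"
definition M where "M A t b = (\<Sum>s\<in>{1..<t}. if kept s \<and> t \<le> s + d s then lh A s b else 0)"
definition Wq where "Wq A t = (\<Sum>b\<in>{1..K}. exp (- eta * f A t b))"
definition q where "q A t a = exp (- eta * f A t a) / Wq A t"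
definition Miss where "Miss t = {s\<in>{1..<t}. kept s \<and> t \<le> s + d s}"

lemma ee: "exp (- eta * (x + y)) = exp (- eta * x) * exp (- eta * y)"
  by (simp only: distrib_left exp_add)

lemma f_split: "f A t b = est A t b + M A t b"
  unfolding f_def M_def est_unfold by (subst sum.distrib[symmetric]) (intro sum.cong, auto)

lemma M_nonneg: "M A t b \<ge> 0"
  unfolding M_def using lh_nonneg by (intro sum_nonneg) auto

lemma Wq_pos: "Wq A t > 0"
  unfolding Wq_def using K1 by (intro sum_pos) auto

lemma q_pos: "q A t a > 0"
  unfolding q_def using Wq_pos by simp

lemma q_sum: "(\<Sum>a\<in>{1..K}. q A t a) = 1"
proof -
  have "Wq A t \<noteq> 0" using Wq_pos[of A t] by simp
  then show ?thesis unfolding q_def by (simp add: sum_divide_distrib[symmetric] Wq_def)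
qed

lemma Wq_eq: "Wq A t = W A t * (\<Sum>b\<in>{1..K}. p A t b * exp (- eta * M A t b))"
proof -
  have "exp (- eta * est A t b) = W A t * p A t b" for b
    unfolding p_def using W_pos[of A t] by simp
  then show ?thesis unfolding Wq_def f_split ee
    by (simp add: sum_distrib_left mult_ac)
qed

lemma Wq_le: "Wq A t \<le> W A t"
proof -
  have "(\<Sum>b\<in>{1..K}. p A t b * exp (- eta * M A t b)) \<le> (\<Sum>b\<in>{1..K}. p A t b)"
    using p_pos M_nonneg eta_pos by (intro sum_mono) (auto intro!: mult_left_le simp: less_imp_le)
  then show ?thesis unfolding Wq_eq p_sum using W_pos[of A t] by (simp add: mult_left_le)
qed

lemma q_ge: "q A t a \<ge> p A t a * exp (- eta * M A t a)"
proof -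
  have "p A t a * exp (- eta * M A t a) = exp (- eta * f A t a) / W A t"
    unfolding p_def f_split ee by simp
  also have "\<dots> \<le> q A t a" unfolding q_def
    using Wq_le[of A t] Wq_pos[of A t] W_pos[of A t] by (intro divide_left_mono) auto
  finally show ?thesis .
qed

lemma Miss_card: "card (Miss t) \<le> B"
proof -
  have "Miss t \<subseteq> {t - B..<t}" unfolding Miss_def using kept_B by fastforce
  then have "card (Miss t) \<le> card {t - B..<t}" by (intro card_mono) auto
  then show ?thesis by simp
qed

lemma pM: "(\<Sum>b\<in>{1..K}. p A t b * M A t b) \<le> 2 * real (card (Miss t))"
proof -
  have "(\<Sum>b\<in>{1..K}. p A t b * M A t b) = (\<Sum>s\<in>{1..<t}. if kept s \<and> t \<le> s + d s then (\<Sum>b\<in>{1..K}. p A t b * lh A s b) else 0)"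
    unfolding M_def by (rule swap_if)
  also have "\<dots> \<le> (\<Sum>s\<in>{1..<t}. if kept s \<and> t \<le> s + d s then 2 else 0)"
  proof (intro sum_mono)
    fix s assume "s \<in> {1..<t}"
    show "(if kept s \<and> t \<le> s + d s then (\<Sum>b\<in>{1..K}. p A t b * lh A s b) else 0) \<le> (if kept s \<and> t \<le> s + d s then 2 else 0)"
    proof (cases "kept s \<and> t \<le> s + d s")
      case True
      then have "s \<le> t" "t \<le> s + B" using kept_B[of s] \<open>s \<in> {1..<t}\<close> by auto
      then have "(\<Sum>b\<in>{1..K}. p A t b * lh A s b) \<le> 2" by (intro plh_bound ratio) auto
      then show ?thesis using True by simp
    next
      case False
      then show ?thesis by (simp only: if_not_P) simp
    qed
  qed
  also have "\<dots> = 2 * real (card (Miss t))" unfolding Miss_def by (rule sum_if_const) simp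
  finally show ?thesis .
qed

lemma qp_ratio: "q A t a \<le> exp 1 * p A t a"
proof -
  have "real (card (Miss t)) \<le> real B" using Miss_card by simp
  then have "eta * card (Miss t) \<le> eta * B" using eta_pos by (intro mult_left_mono) auto
  moreover have "eta * (\<Sum>b\<in>{1..K}. p A t b * M A t b) \<le> eta * (2 * real (card (Miss t)))"
    using pM[of A t] eta_pos by (intro mult_left_mono) auto
  ultimately have "eta * (\<Sum>b\<in>{1..K}. p A t b * M A t b) \<le> 2 * eta * B" by linarith
  moreover have "1 / (2 * exp 1) = (1 / exp 1) / (2::real)" by simp
  ultimately have h: "eta * (\<Sum>b\<in>{1..K}. p A t b * M A t b) \<le> 1 / (2 * exp 1)"
    using etaB by linarith
  have "(\<Sum>b\<in>{1..K}. p A t b * (1 - eta * M A t b)) \<le> (\<Sum>b\<in>{1..K}. p A t b * exp (- eta * M A t b))"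
    using p_pos exp_ge_add_one_self[of "- (eta * M A t _)"] by (intro sum_mono mult_left_mono) (auto simp: less_imp_le)
  moreover have "(\<Sum>b\<in>{1..K}. p A t b * (1 - eta * M A t b)) = 1 - eta * (\<Sum>b\<in>{1..K}. p A t b * M A t b)"
    using p_sum[of A t] by (simp add: algebra_simps sum_subtractf sum_distrib_left)
  ultimately have "(\<Sum>b\<in>{1..K}. p A t b * exp (- eta * M A t b)) \<ge> 1 - 1 / (2 * exp 1)" using h by linarith
  then have Wq: "Wq A t \<ge> W A t * (1 - 1 / (2 * exp 1))"
    unfolding Wq_eq using W_pos[of A t] by (intro mult_left_mono) auto
  have pos: "1 - 1 / (2 * exp (1::real)) > 0" using e_ge2 by (simp add: field_simps)
  have "q A t a \<le> exp (- eta * est A t a) / Wq A t"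
    unfolding q_def f_split using M_nonneg[of A t a] eta_pos Wq_pos[of A t]
    by (intro divide_right_mono) (auto simp: mult_left_mono)
  also have "\<dots> \<le> exp (- eta * est A t a) / (W A t * (1 - 1 / (2 * exp 1)))"
    using Wq W_pos[of A t] pos Wq_pos[of A t] by (intro divide_left_mono) auto
  also have "\<dots> = p A t a / (1 - 1 / (2 * exp 1))" unfolding p_def by simp
  also have "\<dots> \<le> exp 1 * p A t a"
  proof -
    have "1 \<le> exp 1 * (1 - 1 / (2 * exp (1::real)))" using e_ge2 by (simp add: field_simps)
    then have "p A t a * 1 \<le> p A t a * (exp 1 * (1 - 1 / (2 * exp 1)))"
      using p_pos[of A t a] by (intro mult_left_mono) auto
    then show ?thesis using pos by (simp add: divide_le_eq mult_ac)
  qed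
  finally show ?thesis .
qed

lemma exp_quad:
  fixes x :: real assumes x: "x \<ge> 0"
  shows "exp (- x) \<le> 1 - x + x^2 / 2"
proof -
  have a: "1 + x + x^2/2 \<le> exp x" by (rule exp_lower_Taylor_quadratic[OF x])
  have "x^2 \<ge> 0" by simp
  then have pa: "1 + x + x^2/2 > 0" using x by linarith
  have prod: "(1 - x + x^2/2) * (1 + x + x^2/2) \<ge> 1"
  proof -
    have "(1 - x + x^2/2) * (1 + x + x^2/2) = 1 + x^4/4" by (simp add: algebra_simps power2_eq_square power4_eq_xxxx)
    moreover have "x^4 \<ge> 0" by simp
    ultimately show ?thesis by linarith
  qed
  have "exp (- x) = 1 / exp x" by (simp add: exp_minus field_simps)
  also have "\<dots> \<le> 1 / (1 + x + x^2/2)" using a pa by (intro divide_left_mono) auto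
  also have "\<dots> \<le> 1 - x + x^2 / 2" using prod pa by (simp add: divide_le_eq)
  finally show ?thesis .
qed

lemma f_Suc: "1 \<le> t \<Longrightarrow> f A (Suc t) b = f A t b + (if kept t then lh A t b else 0)"
  unfolding f_def by (simp add: sum.op_ivl_Suc)

definition G where "G A t = (if kept t then - eta * (\<Sum>b\<in>{1..K}. q A t b * lh A t b)
     + eta^2 / 2 * (\<Sum>b\<in>{1..K}. q A t b * (lh A t b)^2) else 0)"

lemma Wq_step: "1 \<le> t \<Longrightarrow> Wq A (Suc t) \<le> Wq A t * exp (G A t)"
proof (cases "kept t")
  case False
  assume "1 \<le> t"
  then show ?thesis using False unfolding Wq_def f_Suc[OF \<open>1 \<le> t\<close>] G_def by simp
next
  case True
  assume t: "1 \<le> t"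
  have qe: "exp (- eta * f A t b) = Wq A t * q A t b" for b
    unfolding q_def using Wq_pos[of A t] by simp
  have "Wq A (Suc t) = (\<Sum>b\<in>{1..K}. exp (- eta * f A t b) * exp (- eta * lh A t b))"
    unfolding Wq_def f_Suc[OF t] ee using True by simp
  also have "\<dots> = (\<Sum>b\<in>{1..K}. Wq A t * q A t b * exp (- eta * lh A t b))"
    by (simp only: qe)
  also have "\<dots> \<le> (\<Sum>b\<in>{1..K}. Wq A t * q A t b * (1 - eta * lh A t b + (eta * lh A t b)^2 / 2))"
    using Wq_pos q_pos lh_nonneg eta_pos exp_quad[of "eta * lh A t _"]
    by (intro sum_mono mult_left_mono) (auto intro: less_imp_le)
  also have "\<dots> = Wq A t * (1 + G A t)"
  proof -
    have "(\<Sum>b\<in>{1..K}. Wq A t * q A t b * (1 - eta * lh A t b + (eta * lh A t b)^2 / 2))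
      = Wq A t * ((\<Sum>b\<in>{1..K}. q A t b) - eta * (\<Sum>b\<in>{1..K}. q A t b * lh A t b)
          + eta^2/2 * (\<Sum>b\<in>{1..K}. q A t b * (lh A t b)^2))"
      by (simp add: algebra_simps sum.distrib sum_subtractf sum_distrib_left power_mult_distrib)
    then show ?thesis unfolding q_sum G_def using True by simp
  qed
  also have "\<dots> \<le> Wq A t * exp (G A t)"
    using Wq_pos[of A t] exp_ge_add_one_self[of "G A t"] by (intro mult_left_mono) auto
  finally show ?thesis .
qed

lemma Wq_one: "Wq A (Suc 0) = real K"
  unfolding Wq_def f_def by simp

lemma Wq_bound: "Wq A (Suc n) \<le> real K * exp (\<Sum>t\<in>{1..n}. G A t)"
proof (induction n)
  case 0
  then show ?case using Wq_one by simp
next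
  case (Suc n)
  have "Wq A (Suc (Suc n)) \<le> Wq A (Suc n) * exp (G A (Suc n))" by (rule Wq_step) simp
  also have "\<dots> \<le> real K * exp (\<Sum>t\<in>{1..n}. G A t) * exp (G A (Suc n))"
    using Suc.IH by (intro mult_right_mono) auto
  also have "\<dots> = real K * exp (\<Sum>t\<in>{1..Suc n}. G A t)" by (simp add: exp_add)
  finally show ?case .
qed

lemma EW:
  assumes a: "a \<in> {1..K}"
  shows "(\<Sum>t\<in>{1..T}. if kept t then (\<Sum>b\<in>{1..K}. q A t b * lh A t b) - lh A t a else 0)
     \<le> ln (real K) / eta + eta / 2 * (\<Sum>t\<in>{1..T}. if kept t then (\<Sum>b\<in>{1..K}. q A t b * (lh A t b)^2) else 0)"
proof -
  have "exp (- eta * f A (Suc T) a) \<le> Wq A (Suc T)"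
    unfolding Wq_def using a by (intro member_le_sum) auto
  also have "\<dots> \<le> real K * exp (\<Sum>t\<in>{1..T}. G A t)" by (rule Wq_bound)
  finally have "ln (exp (- eta * f A (Suc T) a)) \<le> ln (real K * exp (\<Sum>t\<in>{1..T}. G A t))"
    by (subst ln_le_cancel_iff) (use K1 in auto)
  then have h: "- eta * f A (Suc T) a \<le> ln (real K) + (\<Sum>t\<in>{1..T}. G A t)"
    using K1 by (simp add: ln_mult)
  have fT: "f A (Suc T) a = (\<Sum>t\<in>{1..T}. if kept t then lh A t a else 0)"
    unfolding f_def by (intro sum.cong) auto
  have GS: "(\<Sum>t\<in>{1..T}. G A t) = - eta * (\<Sum>t\<in>{1..T}. if kept t then (\<Sum>b\<in>{1..K}. q A t b * lh A t b) else 0)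
      + eta^2/2 * (\<Sum>t\<in>{1..T}. if kept t then (\<Sum>b\<in>{1..K}. q A t b * (lh A t b)^2) else 0)"
  proof -
    have "G A t = - eta * (if kept t then (\<Sum>b\<in>{1..K}. q A t b * lh A t b) else 0)
      + eta^2/2 * (if kept t then (\<Sum>b\<in>{1..K}. q A t b * (lh A t b)^2) else 0)" for t
      unfolding G_def by simp
    then show ?thesis by (simp only: sum.distrib sum_distrib_left[symmetric])
  qed
  have LHS: "(\<Sum>t\<in>{1..T}. if kept t then (\<Sum>b\<in>{1..K}. q A t b * lh A t b) - lh A t a else 0)
     = (\<Sum>t\<in>{1..T}. if kept t then (\<Sum>b\<in>{1..K}. q A t b * lh A t b) else 0) - f A (Suc T) a"
    unfolding fT by (simp add: sum_subtractf[symmetric] if_distrib cong: if_cong)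
  show ?thesis unfolding LHS using h GS eta_pos
    by (simp add: field_simps power2_eq_square)
qed

lemma dep_lt_mono: "dep_lt t g \<Longrightarrow> t \<le> t' \<Longrightarrow> dep_lt t' g"
  unfolding dep_lt_def by auto

lemma dep_p: "dep_lt t (\<lambda>A. p A t a)"
  unfolding dep_lt_def using p_dep_lt by blast

lemma dep_lh: "dep_lt (Suc s) (\<lambda>A. lh A s a)"
  unfolding dep_lt_def using lh_dep by (metis le_imp_less_Suc)

lemma dep_f: "dep_lt t (\<lambda>A. f A t b)"
  unfolding dep_lt_def f_def using lh_dep by (intro allI impI sum.cong refl) (metis atLeastLessThan_iff le_less_trans)

lemma dep_q: "dep_lt t (\<lambda>A. q A t a)"
proof -
  have fe: "f A t b = f A' t b" if "\<forall>s<t. A s = A' s" for A A' b using dep_f[of t b] that unfolding dep_lt_def by blast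
  show ?thesis
  proof (unfold dep_lt_def, intro allI impI)
    fix A A' :: "nat \<Rightarrow> nat" assume h: "\<forall>s<t. A s = A' s"
    show "q A t a = q A' t a" unfolding q_def Wq_def using fe[OF h] by simp
  qed
qed

lemma dep_M: "dep_lt t (\<lambda>A. M A t b)"
  unfolding dep_lt_def M_def using lh_dep by (intro allI impI sum.cong refl) (metis atLeastLessThan_iff le_less_trans)

lemma Expt_step:
  assumes t: "t \<in> {1..T}" and g: "dep_lt (Suc t) g"
  shows "Expt {1..T} g = Expt {1..<t} (\<lambda>A. \<Sum>a\<in>{1..K}. p A t a * g (A(t:=a)))"
proof -
  have "Expt {1..T} g = Expt ({1..T} \<inter> {..<Suc t}) g" by (rule Expt_trunc[OF _ g]) simp
  also have "{1..T} \<inter> {..<Suc t} = {1..t}" using t by auto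
  also have "Expt {1..t} g = Expt ({1..t} - {t}) (\<lambda>A. \<Sum>a\<in>{1..K}. p A t a * g (A(t:=a)))"
    using t by (intro Expt_remove) auto
  also have "{1..t} - {t} = {1..<t}" by auto
  finally show ?thesis .
qed

lemma Expt_lift: "t \<le> Suc T \<Longrightarrow> dep_lt t g \<Longrightarrow> Expt {1..<t} g = Expt {1..T} g"
proof -
  assume t: "t \<le> Suc T" and g: "dep_lt t g"
  have "Expt {1..T} g = Expt ({1..T} \<inter> {..<t}) g" by (rule Expt_trunc[OF _ g]) simp
  also have "{1..T} \<inter> {..<t} = {1..<t}" using t by auto
  finally show ?thesis by simp
qed

lemma lh_upd: "lh (A(t:=b)) t a = (if b = a then l t a / p A t a else 0)"
  unfolding lh_def by (simp add: p_upd)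

lemma unbiased:
  assumes t: "t \<in> {1..T}" and a: "a \<in> {1..K}" and h: "dep_lt t h"
  shows "Expt {1..T} (\<lambda>A. lh A t a * h A) = l t a * Expt {1..T} h"
proof -
  have g: "dep_lt (Suc t) (\<lambda>A. lh A t a * h A)"
  proof (unfold dep_lt_def, intro allI impI)
    fix A A' :: "nat \<Rightarrow> nat" assume e: "\<forall>s<Suc t. A s = A' s"
    have "\<forall>s'\<le>t. A s' = A' s'" "\<forall>s<t. A s = A' s" using e by auto
    then show "lh A t a * h A = lh A' t a * h A'" using lh_dep h unfolding dep_lt_def by metis
  qed
  have "Expt {1..T} (\<lambda>A. lh A t a * h A) = Expt {1..<t} (\<lambda>A. \<Sum>b\<in>{1..K}. p A t b * (lh (A(t:=b)) t a * h (A(t:=b))))"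
    by (rule Expt_step[OF t g])
  also have "\<dots> = Expt {1..<t} (\<lambda>A. l t a * h A)"
  proof -
    have "(\<Sum>b\<in>{1..K}. p A t b * (lh (A(t:=b)) t a * h (A(t:=b)))) = l t a * h A" for A
    proof -
      have hb: "h (A(t:=b)) = h A" for b using h unfolding dep_lt_def by auto
      have "(\<Sum>b\<in>{1..K}. p A t b * (lh (A(t:=b)) t a * h (A(t:=b))))
          = (\<Sum>b\<in>{1..K}. if b = a then p A t a * (l t a / p A t a * h A) else 0)"
        unfolding lh_upd hb by (intro sum.cong) auto
      also have "\<dots> = l t a * h A" using a p_pos[of A t a] by (simp add: sum.delta)
      finally show ?thesis .
    qed
    then show ?thesis by simp
  qed
  also have "\<dots> = l t a * Expt {1..<t} h" by (rule Expt_cmult)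
  also have "Expt {1..<t} h = Expt {1..T} h" using t h by (intro Expt_lift) auto
  finally show ?thesis .
qed

lemma loss_exp:
  assumes t: "t \<in> {1..T}"
  shows "Expt {1..T} (\<lambda>A. l t (A t)) = Expt {1..T} (\<lambda>A. \<Sum>a\<in>{1..K}. p A t a * l t a)"
proof -
  have g: "dep_lt (Suc t) (\<lambda>A. l t (A t))" unfolding dep_lt_def by auto
  have dp: "dep_lt t (\<lambda>A. \<Sum>a\<in>{1..K}. p A t a * l t a)"
  proof (unfold dep_lt_def, intro allI impI)
    fix A A' :: "nat \<Rightarrow> nat" assume h: "\<forall>s<t. A s = A' s"
    show "(\<Sum>a\<in>{1..K}. p A t a * l t a) = (\<Sum>a\<in>{1..K}. p A' t a * l t a)" using p_dep_lt[OF h] by simp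
  qed
  have "Expt {1..T} (\<lambda>A. l t (A t)) = Expt {1..<t} (\<lambda>A. \<Sum>a\<in>{1..K}. p A t a * l t ((A(t:=a)) t))"
    by (rule Expt_step[OF t g])
  also have "\<dots> = Expt {1..<t} (\<lambda>A. \<Sum>a\<in>{1..K}. p A t a * l t a)" by simp
  also have "\<dots> = Expt {1..T} (\<lambda>A. \<Sum>a\<in>{1..K}. p A t a * l t a)" using t dp by (intro Expt_lift) auto
  finally show ?thesis .
qed

lemma drift1:
  assumes s: "s \<in> {1..<t}" and ts: "t \<le> s + d s" and tT: "t \<le> T"
  shows "Expt {1..T} (\<lambda>A. \<Sum>a\<in>{1..K}. p A t a * lh A s a) \<le> 1"
proof -
  define g where "g A = (\<Sum>a\<in>{1..K}. p A t a * lh A s a)" for A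
  have dg: "dep_lt t g"
  proof (unfold dep_lt_def, intro allI impI)
    fix A A' :: "nat \<Rightarrow> nat" assume h: "\<forall>s<t. A s = A' s"
    have "\<forall>s'\<le>s. A s' = A' s'" using h s by auto
    then have "lh A s a = lh A' s a" for a by (rule lh_dep)
    then show "g A = g A'" unfolding g_def using p_dep_lt[OF h] by simp
  qed
  have "Expt {1..T} g = Expt {1..<t} g" using tT dg by (intro Expt_lift[symmetric]) auto
  also have "\<dots> = Expt ({1..<t} - {s}) (\<lambda>A. \<Sum>b\<in>{1..K}. p A s b * g (A(s:=b)))"
    using s ts by (intro Expt_remove) auto
  also have "\<dots> \<le> Expt ({1..<t} - {s}) (\<lambda>_. 1)"
  proof (rule Expt_mono)
    fix A
    have "(\<Sum>b\<in>{1..K}. p A s b * g (A(s:=b))) = (\<Sum>b\<in>{1..K}. p A s b * (\<Sum>a\<in>{1..K}. p A t a * (if b = a then l s a / p A s a else 0)))"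
      unfolding g_def lh_upd using ts by (simp add: p_upd)
    also have "\<dots> = (\<Sum>b\<in>{1..K}. p A t b * l s b)"
    proof (intro sum.cong refl)
      fix b assume "b \<in> {1..K}"
      then have "(\<Sum>a\<in>{1..K}. p A t a * (if b = a then l s a / p A s a else 0)) = p A t b * (l s b / p A s b)"
        by (simp add: if_distrib sum.delta cong: if_cong)
      then show "p A s b * (\<Sum>a\<in>{1..K}. p A t a * (if b = a then l s a / p A s a else 0)) = p A t b * l s b"
        using p_pos[of A s b] by simp
    qed
    also have "\<dots> \<le> (\<Sum>b\<in>{1..K}. p A t b * 1)"
      using p_pos lrange by (intro sum_mono mult_left_mono) (auto intro: less_imp_le)
    also have "\<dots> = 1" using p_sum by simp
    finally show "(\<Sum>b\<in>{1..K}. p A s b * g (A(s:=b))) \<le> 1" .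
  qed
  also have "\<dots> = 1" by (rule Expt_one) simp
  finally show ?thesis unfolding g_def .
qed

lemma Expt_if: "Expt I (\<lambda>A. if c then g A else 0) = (if c then Expt I g else 0)"
  by (cases c) (simp_all add: Expt_def)

lemma drift:
  assumes t: "t \<in> {1..T}"
  shows "Expt {1..T} (\<lambda>A. \<Sum>a\<in>{1..K}. (p A t a - q A t a) * l t a) \<le> eta * real (card (Miss t))"
proof -
  have pt: "(p A t a - q A t a) * l t a \<le> eta * (p A t a * M A t a)" for A a
  proof -
    have "p A t a * (1 - eta * M A t a) \<le> p A t a * exp (- eta * M A t a)"
      using p_pos[of A t a] exp_ge_add_one_self[of "- eta * M A t a"] by (intro mult_left_mono) auto
    then have pq: "p A t a - q A t a \<le> eta * (p A t a * M A t a)" using q_ge[of A t a] by (simp add: algebra_simps)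
    have pM0: "eta * (p A t a * M A t a) \<ge> 0" using eta_pos p_pos[of A t a] M_nonneg[of A t a] by simp
    show ?thesis
    proof (cases "p A t a - q A t a \<le> 0")
      case True
      then show ?thesis using lrange[of t a] pM0 by (smt (verit) mult_nonpos_nonneg)
    next
      case False
      then have "(p A t a - q A t a) * l t a \<le> (p A t a - q A t a) * 1"
        using lrange[of t a] by (intro mult_left_mono) auto
      then show ?thesis using pq by simp
    qed
  qed
  have "Expt {1..T} (\<lambda>A. \<Sum>a\<in>{1..K}. (p A t a - q A t a) * l t a) \<le> Expt {1..T} (\<lambda>A. eta * (\<Sum>a\<in>{1..K}. p A t a * M A t a))"
    using pt by (intro Expt_mono) (simp add: sum_distrib_left sum_mono)
  also have "\<dots> = eta * Expt {1..T} (\<lambda>A. \<Sum>s\<in>{1..<t}. if kept s \<and> t \<le> s + d s then (\<Sum>b\<in>{1..K}. p A t b * lh A s b) else 0)"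
    unfolding Expt_cmult M_def swap_if ..
  also have "\<dots> = eta * (\<Sum>s\<in>{1..<t}. if kept s \<and> t \<le> s + d s then Expt {1..T} (\<lambda>A. \<Sum>b\<in>{1..K}. p A t b * lh A s b) else 0)"
    by (simp only: Expt_sum Expt_if)
  also have "\<dots> \<le> eta * (\<Sum>s\<in>{1..<t}. if kept s \<and> t \<le> s + d s then 1 else 0)"
    using eta_pos drift1 t by (intro mult_left_mono sum_mono) auto
  also have "\<dots> = eta * real (card (Miss t))" unfolding Miss_def by (subst sum_if_const) auto
  finally show ?thesis .
qed

lemma sq_term:
  assumes t: "t \<in> {1..T}"
  shows "Expt {1..T} (\<lambda>A. \<Sum>b\<in>{1..K}. q A t b * (lh A t b)^2) \<le> exp 1 * real K"
proof -
  define h where "h b A = q A t b * l t b / p A t b" for b A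
  have dh: "dep_lt t (h b)" for b
  proof (unfold dep_lt_def, intro allI impI)
    fix A A' :: "nat \<Rightarrow> nat" assume e: "\<forall>s<t. A s = A' s"
    show "h b A = h b A'" unfolding h_def using p_dep_lt[OF e] dep_q[of t b] e unfolding dep_lt_def by simp
  qed
  have sq: "q A t b * (lh A t b)^2 = lh A t b * h b A" for A b
    unfolding h_def lh_def by (simp add: power2_eq_square)
  have "Expt {1..T} (\<lambda>A. \<Sum>b\<in>{1..K}. q A t b * (lh A t b)^2) = (\<Sum>b\<in>{1..K}. Expt {1..T} (\<lambda>A. lh A t b * h b A))"
    unfolding sq Expt_sum ..
  also have "\<dots> = (\<Sum>b\<in>{1..K}. l t b * Expt {1..T} (h b))"
    using t dh by (intro sum.cong refl unbiased) auto
  also have "\<dots> \<le> (\<Sum>b\<in>{1..K}. exp 1)"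
  proof (intro sum_mono)
    fix b assume b: "b \<in> {1..K}"
    have "l t b * Expt {1..T} (h b) = Expt {1..T} (\<lambda>A. l t b * h b A)" by (rule Expt_cmult[symmetric])
    also have "\<dots> \<le> Expt {1..T} (\<lambda>_. exp 1)"
    proof (rule Expt_mono)
      fix A
      have "l t b * h b A = (l t b * l t b) * (q A t b / p A t b)" unfolding h_def by simp
      also have "\<dots> \<le> 1 * (q A t b / p A t b)"
        using lrange[of t b] q_pos[of A t b] p_pos[of A t b]
        by (intro mult_right_mono) (auto simp: mult_le_one)
      also have "\<dots> \<le> exp 1" using qp_ratio[of A t b] p_pos[of A t b] by (simp add: divide_le_eq)
      finally show "l t b * h b A \<le> exp 1" .
    qed
    also have "\<dots> = exp 1" by (rule Expt_const) simp
    finally show "l t b * Expt {1..T} (h b) \<le> exp 1" .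
  qed
  also have "\<dots> = exp 1 * real K" by simp
  finally show ?thesis .
qed

lemma q_unb:
  assumes t: "t \<in> {1..T}"
  shows "Expt {1..T} (\<lambda>A. \<Sum>b\<in>{1..K}. q A t b * l t b) = Expt {1..T} (\<lambda>A. \<Sum>b\<in>{1..K}. q A t b * lh A t b)"
proof -
  have "Expt {1..T} (\<lambda>A. \<Sum>b\<in>{1..K}. q A t b * lh A t b) = (\<Sum>b\<in>{1..K}. Expt {1..T} (\<lambda>A. lh A t b * q A t b))"
    unfolding Expt_sum by (simp add: mult.commute)
  also have "\<dots> = (\<Sum>b\<in>{1..K}. l t b * Expt {1..T} (\<lambda>A. q A t b))"
    using t dep_q by (intro sum.cong refl unbiased) auto
  also have "\<dots> = Expt {1..T} (\<lambda>A. \<Sum>b\<in>{1..K}. q A t b * l t b)"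
    unfolding Expt_sum by (simp add: Expt_cmult[symmetric] mult.commute)
  finally show ?thesis by simp
qed

lemma a_unb:
  assumes t: "t \<in> {1..T}" and a: "a \<in> {1..K}"
  shows "Expt {1..T} (\<lambda>A. lh A t a) = l t a"
  using unbiased[OF t a, of "\<lambda>_. 1"] Expt_one[of "{1..T}"] by (simp add: dep_lt_def)

lemma main_bound:
  assumes a: "a \<in> {1..K}"
  shows "Expt {1..T} (\<lambda>A. \<Sum>t\<in>{1..T}. l t (A t)) - (\<Sum>t\<in>{1..T}. l t a)
    \<le> (\<Sum>t\<in>{1..T}. if kept t then 0 else 1) + eta * (\<Sum>t\<in>{1..T}. real (card (Miss t)))
       + ln (real K) / eta + eta / 2 * (exp 1 * real K * real T)"
proof -
  define P where "P t A = (\<Sum>b\<in>{1..K}. p A t b * l t b)" for t A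
  define Y where "Y t = Expt {1..T} (\<lambda>A. (\<Sum>b\<in>{1..K}. q A t b * lh A t b) - lh A t a)" for t
  have L: "Expt {1..T} (\<lambda>A. \<Sum>t\<in>{1..T}. l t (A t)) - (\<Sum>t\<in>{1..T}. l t a) = (\<Sum>t\<in>{1..T}. Expt {1..T} (P t) - l t a)"
  proof -
    have "Expt {1..T} (\<lambda>A. \<Sum>t\<in>{1..T}. l t (A t)) = (\<Sum>t\<in>{1..T}. Expt {1..T} (\<lambda>A. l t (A t)))" by (rule Expt_sum)
    also have "\<dots> = (\<Sum>t\<in>{1..T}. Expt {1..T} (P t))" unfolding P_def by (intro sum.cong refl loss_exp)
    finally show ?thesis by (simp add: sum_subtractf)
  qed
  have X: "Expt {1..T} (P t) - l t a \<le> (if kept t then eta * real (card (Miss t)) + Y t else 1)" if t: "t \<in> {1..T}" for t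
  proof (cases "kept t")
    case True
    have "Expt {1..T} (P t) = Expt {1..T} (\<lambda>A. (\<Sum>b\<in>{1..K}. (p A t b - q A t b) * l t b) + (\<Sum>b\<in>{1..K}. q A t b * l t b))"
      unfolding P_def by (simp add: sum.distrib[symmetric] algebra_simps)
    also have "\<dots> = Expt {1..T} (\<lambda>A. \<Sum>b\<in>{1..K}. (p A t b - q A t b) * l t b) + Expt {1..T} (\<lambda>A. \<Sum>b\<in>{1..K}. q A t b * lh A t b)"
      unfolding Expt_add q_unb[OF t] ..
    finally have "Expt {1..T} (P t) - l t a = Expt {1..T} (\<lambda>A. \<Sum>b\<in>{1..K}. (p A t b - q A t b) * l t b) + Y t"
      unfolding Y_def Expt_diff a_unb[OF t a] by simp
    then show ?thesis using True drift[OF t] by simp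
  next
    case False
    have "Expt {1..T} (P t) \<le> Expt {1..T} (\<lambda>_. 1)"
    proof (rule Expt_mono)
      fix A
      have "P t A \<le> (\<Sum>b\<in>{1..K}. p A t b * 1)" unfolding P_def
        using p_pos lrange by (intro sum_mono mult_left_mono) (auto intro: less_imp_le)
      then show "P t A \<le> 1" using p_sum by simp
    qed
    then show ?thesis using False Expt_one[of "{1..T}"] lrange[of t a] by simp
  qed
  have split: "(if kept t then eta * real (card (Miss t)) + Y t else 1)
      = (if kept t then 0 else 1) + eta * (if kept t then real (card (Miss t)) else 0) + (if kept t then Y t else 0)" for t
    by simp
  have "(\<Sum>t\<in>{1..T}. if kept t then Y t else 0)
     = Expt {1..T} (\<lambda>A. \<Sum>t\<in>{1..T}. if kept t then (\<Sum>b\<in>{1..K}. q A t b * lh A t b) - lh A t a else 0)"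
    unfolding Y_def Expt_sum Expt_if ..
  also have "\<dots> \<le> Expt {1..T} (\<lambda>A. ln (real K) / eta + eta / 2 * (\<Sum>t\<in>{1..T}. if kept t then (\<Sum>b\<in>{1..K}. q A t b * (lh A t b)^2) else 0))"
    by (intro Expt_mono EW a)
  also have "\<dots> = ln (real K) / eta + eta / 2 * (\<Sum>t\<in>{1..T}. if kept t then Expt {1..T} (\<lambda>A. \<Sum>b\<in>{1..K}. q A t b * (lh A t b)^2) else 0)"
    unfolding Expt_add Expt_cmult Expt_sum Expt_if by (simp add: Expt_const)
  also have "\<dots> \<le> ln (real K) / eta + eta / 2 * (\<Sum>t\<in>{1..T}. exp 1 * real K)"
  proof -
    have "(\<Sum>t\<in>{1..T}. if kept t then Expt {1..T} (\<lambda>A. \<Sum>b\<in>{1..K}. q A t b * (lh A t b)^2) else 0) \<le> (\<Sum>t\<in>{1..T}. exp 1 * real K)"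
      using sq_term by (intro sum_mono) auto
    then show ?thesis using eta_pos by (simp add: mult_left_mono)
  qed
  finally have Ysum: "(\<Sum>t\<in>{1..T}. if kept t then Y t else 0) \<le> ln (real K) / eta + eta / 2 * (exp 1 * real K * real T)"
    by (simp add: mult_ac)
  have Msum: "(\<Sum>t\<in>{1..T}. if kept t then real (card (Miss t)) else 0) \<le> (\<Sum>t\<in>{1..T}. real (card (Miss t)))"
    by (intro sum_mono) auto
  have "(\<Sum>t\<in>{1..T}. Expt {1..T} (P t) - l t a) \<le> (\<Sum>t\<in>{1..T}. if kept t then eta * real (card (Miss t)) + Y t else 1)"
    using X by (rule sum_mono)
  also have "\<dots> = (\<Sum>t\<in>{1..T}. if kept t then 0 else 1) + eta * (\<Sum>t\<in>{1..T}. if kept t then real (card (Miss t)) else 0)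
      + (\<Sum>t\<in>{1..T}. if kept t then Y t else 0)"
    unfolding split sum.distrib sum_distrib_left ..
  finally show ?thesis unfolding L using Ysum Msum eta_pos
    by (smt (verit) mult_left_mono)
qed

lemma skip_count: "(\<Sum>t\<in>{1..T}. if kept t then 0 else 1) \<le> (\<Sum>t\<in>{1..T}. real (d t)) / beta"
proof -
  have "(\<Sum>t\<in>{1..T}. if kept t then 0 else (1::real)) \<le> (\<Sum>t\<in>{1..T}. real (d t) / beta)"
    using beta_pos by (intro sum_mono) (auto simp: kept_def field_simps)
  then show ?thesis by (simp add: sum_divide_distrib)
qed

lemma miss_count: "(\<Sum>t\<in>{1..T}. real (card (Miss t))) \<le> (\<Sum>t\<in>{1..T}. real (d t))"
proof -
  have "(\<Sum>t\<in>{1..T}. real (card (Miss t))) \<le> (\<Sum>t\<in>{1..T}. \<Sum>s\<in>{1..T}. if s < t \<and> t \<le> s + d s then 1 else 0)"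
  proof (intro sum_mono)
    fix t assume t: "t \<in> {1..T}"
    have "Miss t \<subseteq> {s\<in>{1..T}. s < t \<and> t \<le> s + d s}" using t unfolding Miss_def by auto
    then have "card (Miss t) \<le> card {s\<in>{1..T}. s < t \<and> t \<le> s + d s}" by (intro card_mono) auto
    then show "real (card (Miss t)) \<le> (\<Sum>s\<in>{1..T}. if s < t \<and> t \<le> s + d s then 1 else 0)"
      by (subst sum_if_const) auto
  qed
  also have "\<dots> = (\<Sum>s\<in>{1..T}. \<Sum>t\<in>{1..T}. if s < t \<and> t \<le> s + d s then 1 else 0)"
    by (rule sum.swap)
  also have "\<dots> \<le> (\<Sum>s\<in>{1..T}. real (d s))"
  proof (intro sum_mono)
    fix s
    have "card {t\<in>{1..T}. s < t \<and> t \<le> s + d s} \<le> card {s<..s + d s}" by (intro card_mono) auto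
    then show "(\<Sum>t\<in>{1..T}. if s < t \<and> t \<le> s + d s then 1 else 0) \<le> real (d s)"
      by (subst sum_if_const) auto
  qed
  finally show ?thesis .
qed

end

theorem corollary4:
  fixes K T :: nat and l :: "nat \<Rightarrow> nat \<Rightarrow> real" and d :: "nat \<Rightarrow> nat"
    and D eta beta :: real
  assumes "K \<ge> 2" and "T \<ge> 1"
    and "\<And>t a. 0 \<le> l t a \<and> l t a \<le> 1"
    and "D = (\<Sum>t\<in>{1..T}. real (d t))"
    and "beta = sqrt (((exp 1 * K * T / 2 + D) / (4 * exp 1) + D) / (4 * exp 1 * ln K))"
    and "eta = 1 / (4 * exp 1 * beta)"
  shows "skipper_dew_regret K T eta beta l d
           \<le> 2 * sqrt ((K * T * exp 1 / 2 + (1 + 4 * exp 1) * D) * ln K)"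
proof -
  note K2 = assms(1) and T1 = assms(2) and lr = assms(3) and Dd = assms(4) and bdef = assms(5) and edef = assms(6)
  define Y where "Y = (exp 1 * K * T / 2 + D) / (4 * exp 1) + D"
  define c where "c = 4 * exp 1 * ln (real K)"
  have D0: "D \<ge> 0" unfolding Dd by (intro sum_nonneg) auto
  have KT1: "real K \<ge> 1" "real T \<ge> 1" using K2 T1 by auto
  then have KT: "real K * real T \<ge> 1 * 1" by (intro mult_mono) auto
  have "exp 1 * (real K * real T) > 0" using KT1 by (intro mult_pos_pos) auto
  then have "exp 1 * real K * real T > 0" by (simp add: mult.assoc)
  then have "exp 1 * real K * real T / 2 + D > 0" using D0 by simp
  then have "(exp 1 * real K * real T / 2 + D) / (4 * exp 1) > 0" by simp
  then have Ypos: "Y > 0" unfolding Y_def using D0 by linarith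
  have lnK: "ln (real K) > 0" using K2 by simp
  have cpos: "c > 0" unfolding c_def using lnK by simp
  have bY: "beta = sqrt (Y / c)" unfolding bdef Y_def c_def by simp
  have bpos: "beta > 0" unfolding bY using Ypos cpos by simp
  have b2: "beta^2 = Y / c" unfolding bY using Ypos cpos by simp
  have Yc: "Y = c * beta^2" using b2 cpos by simp
  have epos: "eta > 0" unfolding edef using bpos by simp
  have eb: "eta * beta \<le> 1 / (4 * exp 1)" unfolding edef using bpos by simp
  have rate: "dew_rate eta beta = eta" unfolding dew_rate_def edef by simp
  have K1: "K \<ge> 1" using K2 by simp
  have prob: "skipper_dew_prob K eta beta l d A t a = p K eta beta l d A t a" for A t a
    unfolding skipper_dew_prob_def rate p_def[OF K1 epos bpos eb lr] W_def[OF K1 epos bpos eb lr] est_def[OF K1 epos bpos eb lr]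
    by simp
  obtain a where a: "a \<in> {1..K}" and amin: "(MIN a\<in>{1..K}. \<Sum>t\<in>{1..T}. l t a) = (\<Sum>t\<in>{1..T}. l t a)"
  proof -
    have "(MIN a\<in>{1..K}. \<Sum>t\<in>{1..T}. l t a) \<in> (\<lambda>a. \<Sum>t\<in>{1..T}. l t a) ` {1..K}"
      using K1 by (intro Min_in) auto
    then show ?thesis using that by auto
  qed
  have reg: "skipper_dew_regret K T eta beta l d = Expt K eta beta l d {1..T} (\<lambda>A. \<Sum>t\<in>{1..T}. l t (A t)) - (\<Sum>t\<in>{1..T}. l t a)"
    unfolding skipper_dew_regret_def prob Expt_def[OF K1 epos bpos eb lr] amin ..
  note mb = main_bound[where K=K and eta=eta and beta=beta and l=l and d=d and T=T, OF K1 epos bpos eb lr a]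
  note sc = skip_count[where K=K and eta=eta and beta=beta and l=l and d=d and T=T, OF K1 epos bpos eb lr]
  note mc = miss_count[where K=K and eta=eta and beta=beta and l=l and d=d and T=T, OF K1 epos bpos eb lr]
  have "skipper_dew_regret K T eta beta l d \<le> D / beta + eta * D + ln (real K) / eta + eta / 2 * (exp 1 * real K * real T)"
  proof -
    have "eta * (\<Sum>t\<in>{1..T}. real (card (Miss beta d t))) \<le> eta * D"
      using mc epos unfolding Dd by (intro mult_left_mono) auto
    then show ?thesis unfolding reg using mb sc[folded Dd] by linarith
  qed
  also have "\<dots> = Y / beta + c * beta"
    unfolding edef Y_def c_def using bpos by (simp add: field_simps)
  also have "\<dots> = 2 * (c * beta)"
  proof -
    have "Y = c * beta^2" using b2 cpos by simp
    then show ?thesis using bpos by (simp add: power2_eq_square)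
  qed
  also have "\<dots> = 2 * sqrt (c * Y)"
  proof -
    have "c * Y = (c * beta)^2" using Yc by (simp add: power2_eq_square)
    then show ?thesis using cpos bpos by simp
  qed
  also have "c * Y = (K * T * exp 1 / 2 + (1 + 4 * exp 1) * D) * ln K"
    unfolding c_def Y_def by (simp add: field_simps)
  finally show ?thesis .
qed

end
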